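(* Let $\lambda$ be a nonzero real number, $x$ real, and $n\ge0$ an integer. Then $$\sum_{k=0}^{n}\beta_{k,\lambda}(x)\,S_{1,\lambda}(n,k)=n!\sum_{k=0}^{n}\binom{x}{k}\frac{\lambda^{n-k}(1)_{n-k+1,\frac{1}{\lambda}}}{(n-k+1)!}.$$
   Context: For real $y$, $\mu\neq 0$ and integer $k\ge0$: $(y)_{0,\mu}=1$, $(y)_{k,\mu}=y(y-\mu)\cdots(y-(k-1)\mu)$ (used with $\mu=\lambda$ and $\mu=1/\lambda$); $(y)_0=1$, $(y)_k=y(y-1)\cdots(y-k+1)$. The degenerate exponential is $e_\lambda^x(t)=\sum_{k\ge0}(x)_{k,\lambda}t^k/k!=(1+\lambda t)^{x/\lambda}$, $e_\lambda(t)=e^1_\lambda(t)$. The degenerate Bernoulli polynomials are defined by $\frac{t}{e_\lambda(t)-1}e_\lambda^x(t)=\sum_{n\ge0}\beta_{n,\lambda}(x)\frac{t^n}{n!}$. The degenerate Stirling numbers of the first kind are defined by $(x)_{n}=\sum_{k=0}^{n}S_{1,\lambda}(n,k)(x)_{k,\lambda}$ ($n\ge0$). *)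

theory Defs
  imports "HOL-Analysis.Analysis" "HOL-Computational_Algebra.Formal_Power_Series"
begin

text \<open>Generalized falling factorial (y)_{k,mu} = y(y-mu)...(y-(k-1)mu).\<close>
definition dfall :: "real \<Rightarrow> real \<Rightarrow> nat \<Rightarrow> real" where
  "dfall mu y k = (\<Prod>i<k. y - real i * mu)"

definition dexp :: "real \<Rightarrow> real \<Rightarrow> real fps" where
  "dexp lam x = Abs_fps (\<lambda>k. dfall lam x k / fact k)"

definition dbernoulli :: "nat \<Rightarrow> real \<Rightarrow> real \<Rightarrow> real" where
  "dbernoulli n lam x = fact n * fps_nth ((fps_X / (dexp lam 1 - 1)) * dexp lam x) n"

definition dstirling1 :: "real \<Rightarrow> nat \<Rightarrow> nat \<Rightarrow> real" where
  "dstirling1 lam n = (THE c. (\<forall>k>n. c k = 0) \<and>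
      (\<forall>x. dfall 1 x n = (\<Sum>k\<le>n. c k * dfall lam x k)))"

end

theory Submission
  imports Defs
begin

lemma unit_div_mult: "(f::real fps) / (1 + fps_X) * (1 + fps_X) = f"
  by (simp add: fps_divide_unit inverse_mult_eq_1)

lemma binom_deriv': "(1 + fps_X) * fps_deriv (fps_binomial c) = fps_const (c::real) * fps_binomial c"
  using unit_div_mult[of "fps_const c * fps_binomial c"] by (simp add: fps_binomial_deriv mult.commute)

lemma binom_comp: "fps_binomial (a::real) oo (fps_binomial b - 1) = fps_binomial (a*b)"
proof -
  define v where "v = fps_binomial b - 1"
  define G where "G = fps_binomial a oo v"
  have v0: "fps_nth v 0 = 0" by (simp add: v_def)
  have Bv: "fps_binomial b = (1 + fps_X) oo v"
    using v0 by (simp add: v_def fps_compose_add_distrib)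
  have "(1 + fps_X) * fps_deriv G = (fps_deriv (fps_binomial a) oo v) * ((1 + fps_X) * fps_deriv (fps_binomial b))"
  proof -
    have "fps_deriv v = fps_deriv (fps_binomial b)" by (simp add: v_def)
    thus ?thesis by (simp add: G_def fps_compose_deriv[OF v0] mult_ac)
  qed
  also have "\<dots> = fps_const b * ((fps_deriv (fps_binomial a) oo v) * ((1 + fps_X) oo v))"
    unfolding binom_deriv' Bv[symmetric] by (simp add: mult_ac)
  also have "\<dots> = fps_const b * (((1 + fps_X) * fps_deriv (fps_binomial a)) oo v)"
    by (simp add: fps_compose_mult_distrib[OF v0] mult_ac)
  also have "\<dots> = fps_const (a*b) * G"
    unfolding binom_deriv' G_def by (simp add: fps_compose_mult_distrib[OF v0] mult_ac fps_const_mult[symmetric] del: fps_const_mult)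
  finally have eq: "(1 + fps_X) * fps_deriv G = fps_const (a*b) * G" .
  have "fps_deriv G = fps_const (a*b) * G / (1 + fps_X)"
    by (metis eq mult.commute nonzero_mult_div_cancel_left unit_div_mult mult_cancel_right)
  moreover have "fps_nth G 0 = 1" by (simp add: G_def)
  ultimately have "G = fps_binomial (a*b)" using fps_binomial_ODE_unique' by blast
  thus ?thesis by (simp add: G_def v_def)
qed

definition UU :: "real \<Rightarrow> real fps" where
  "UU lam = fps_const (1/lam) * (fps_binomial lam - 1)"

lemma UU0: "fps_nth (UU lam) 0 = 0" by (simp add: UU_def)

lemma dexp_lin:
  assumes "lam \<noteq> 0"
  shows "dexp lam y = fps_binomial (y/lam) oo (fps_const lam * fps_X)"
proof -
  have "dfall lam y k / fact k = lam ^ k * ((y/lam) gchoose k)" for k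
  proof -
    have "lam ^ k * (\<Prod>i=0..<k. y/lam - of_nat i) = (\<Prod>i<k. lam * (y/lam - of_nat i))"
      by (simp add: prod.distrib atLeast0LessThan)
    also have "\<dots> = dfall lam y k" unfolding dfall_def
      using assms by (intro prod.cong) (auto simp: field_simps)
    finally show ?thesis by (simp add: gbinomial_prod_rev)
  qed
  thus ?thesis by (simp add: fps_compose_linear fps_eq_iff dexp_def)
qed

lemma dexp_UU:
  assumes "lam \<noteq> 0"
  shows "dexp lam y oo UU lam = fps_binomial y"
proof -
  have "dexp lam y oo UU lam = fps_binomial (y/lam) oo ((fps_const lam * fps_X) oo UU lam)"
    unfolding dexp_lin[OF assms] by (subst fps_compose_assoc) (simp_all add: UU0)
  also have "(fps_const lam * fps_X) oo UU lam = fps_binomial lam - 1"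
    using assms by (simp add: fps_compose_mult_distrib UU0 UU_def fps_const_mult[symmetric] del: fps_const_mult)
  also have "fps_binomial (y/lam) oo \<dots> = fps_binomial y"
    using assms by (simp add: binom_comp)
  finally show ?thesis .
qed

lemma dfall_uniq:
  assumes "lam \<noteq> 0" "\<forall>k>n. c k = 0" "\<forall>k>n. d k = 0"
    "\<forall>x. (\<Sum>k\<le>n. c k * dfall lam x k) = (\<Sum>k\<le>n. d k * dfall lam x k)"
  shows "c = d"
proof -
  define e where "e k = c k - d k" for k
  have E: "(\<Sum>k\<le>n. e k * dfall lam x k) = 0" for x
    using assms(4)[rule_format, of x] by (simp add: e_def left_diff_distrib sum_subtractf)
  have "e j = 0" for j
  proof (induction j rule: less_induct)
    case (less j)
    show ?case
    proof (cases "j \<le> n")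
      case False thus ?thesis using assms(2,3) by (simp add: e_def)
    next
      case True
      have z: "e k * dfall lam (real j * lam) k = 0" if "k \<le> n" "k \<noteq> j" for k
      proof (cases "k < j")
        case True thus ?thesis using less by simp
      next
        case False
        hence "j < k" using that by simp
        hence "dfall lam (real j * lam) k = 0" unfolding dfall_def
          by (intro prod_zero) (auto intro!: bexI[of _ j])
        thus ?thesis by simp
      qed
      have "0 = (\<Sum>k\<le>n. e k * dfall lam (real j * lam) k)" using E by simp
      also have "\<dots> = e j * dfall lam (real j * lam) j"
      proof -
        have "(\<Sum>k\<in>{..n}-{j}. e k * dfall lam (real j * lam) k) = 0"
          using z by (intro sum.neutral) auto
        thus ?thesis using True by (subst sum.remove[of _ j]) auto
      qed
      finally have "e j * dfall lam (real j * lam) j = 0" by simp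
      moreover have "dfall lam (real j * lam) j \<noteq> 0" unfolding dfall_def
        using assms(1) by (auto simp: left_diff_distrib[symmetric])
      ultimately show ?thesis by simp
    qed
  qed
  thus ?thesis by (auto simp: e_def fun_eq_iff)
qed

lemma stirling_UU:
  assumes "lam \<noteq> 0"
  shows "dstirling1 lam n = (\<lambda>k. fact n / fact k * fps_nth (UU lam ^ k) n)"
proof -
  let ?c = "\<lambda>k. fact n / fact k * fps_nth (UU lam ^ k) n"
  have ex: "(\<forall>k>n. ?c k = 0) \<and> (\<forall>x. dfall 1 x n = (\<Sum>k\<le>n. ?c k * dfall lam x k))"
  proof safe
    fix k assume "n < k"
    thus "?c k = 0" using startsby_zero_power_prefix[OF UU0] by simp
  next
    fix x
    have "fps_nth (dexp lam x oo UU lam) n = x gchoose n" using dexp_UU[OF assms] by simp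
    hence "(\<Sum>k\<le>n. dfall lam x k / fact k * fps_nth (UU lam ^ k) n) = dfall 1 x n / fact n"
      by (simp add: fps_compose_nth dexp_def atMost_atLeast0 gbinomial_prod_rev dfall_def atLeast0LessThan)
    thus "dfall 1 x n = (\<Sum>k\<le>n. ?c k * dfall lam x k)"
      by (simp add: field_simps sum_distrib_left)
  qed
  show ?thesis unfolding dstirling1_def
  proof (rule the_equality)
    show "(\<forall>k>n. ?c k = 0) \<and> (\<forall>x. dfall 1 x n = (\<Sum>k\<le>n. ?c k * dfall lam x k))" by (fact ex)
  next
    fix c assume c: "(\<forall>k>n. c k = 0) \<and> (\<forall>x. dfall 1 x n = (\<Sum>k\<le>n. c k * dfall lam x k))"
    with ex show "c = ?c" using dfall_uniq[OF assms, of n c ?c] by auto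
  qed
qed


lemma UU_nth:
  assumes "lam \<noteq> 0"
  shows "fps_nth (UU lam) (Suc m) = lam ^ m * dfall (1 / lam) 1 (Suc m) / fact (Suc m)"
proof -
  have "lam ^ Suc m * dfall (1 / lam) 1 (Suc m) = (\<Prod>i<Suc m. lam * (1 - real i * (1/lam)))"
    by (simp add: dfall_def prod.distrib)
  also have "\<dots> = (\<Prod>i<Suc m. lam - of_nat i)"
    using assms by (intro prod.cong) (auto simp: field_simps)
  also have "\<dots> = (\<Prod>i=0..<Suc m. lam - of_nat i)" by (simp add: atLeast0LessThan)
  finally have "(\<Prod>i=0..<Suc m. lam - of_nat i) = lam * (lam ^ m * dfall (1 / lam) 1 (Suc m))" by simp
  thus ?thesis using assms by (simp add: UU_def gbinomial_prod_rev)
qed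

theorem theorem6:
  fixes lam x :: real and n :: nat
  assumes "lam \<noteq> 0"
  shows "(\<Sum>k\<le>n. dbernoulli k lam x * dstirling1 lam n k)
       = fact n * (\<Sum>k\<le>n. (x gchoose k) * lam ^ (n - k) * dfall (1 / lam) 1 (n - k + 1)
                                / fact (n - k + 1))"
proof -
  define D where "D = dexp lam 1"
  define Q where "Q = fps_X / (D - 1)"
  define B where "B = Q * dexp lam x"
  define U where "U = UU lam"
  have U0: "fps_nth U 0 = 0" by (simp add: U_def UU0)
  have "(\<Sum>k\<le>n. dbernoulli k lam x * dstirling1 lam n k)
      = (\<Sum>k\<le>n. fact n * (fps_nth B k * fps_nth (U ^ k) n))"
    unfolding stirling_UU[OF assms] dbernoulli_def B_def Q_def D_def U_def
    by (intro sum.cong) auto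
  also have "\<dots> = fact n * fps_nth (B oo U) n"
    by (simp add: sum_distrib_left fps_compose_nth atMost_atLeast0)
  finally have L: "(\<Sum>k\<le>n. dbernoulli k lam x * dstirling1 lam n k) = fact n * fps_nth (B oo U) n" .
  have D1: "fps_nth (D - 1) 1 = 1" by (simp add: D_def dexp_def dfall_def)
  hence Dnz: "D - 1 \<noteq> 0" by auto
  have "subdegree (D - 1) \<le> 1" using D1 by (intro subdegree_leI) simp
  hence "(D - 1) dvd fps_X" using Dnz by (subst fps_dvd_iff) auto
  hence QD: "Q * (D - 1) = fps_X" by (simp add: Q_def)
  have "(Q oo U) * ((D oo U) - 1) = fps_X oo U"
    by (subst QD[symmetric]) (simp add: fps_compose_mult_distrib[OF U0] fps_compose_sub_distrib)
  also have "D oo U = 1 + fps_X" using dexp_UU[OF assms, of 1] by (simp add: D_def U_def fps_binomial_1)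
  finally have QU: "(Q oo U) * fps_X = U" using U0 by simp
  have QUn: "fps_nth (Q oo U) m = fps_nth U (Suc m)" for m
    using arg_cong[OF QU, of "\<lambda>f. fps_nth f (Suc m)"] by simp
  have "B oo U = (Q oo U) * (dexp lam x oo U)"
    unfolding B_def by (rule fps_compose_mult_distrib[OF U0])
  also have "dexp lam x oo U = fps_binomial x" by (simp add: U_def dexp_UU[OF assms])
  finally have "B oo U = fps_binomial x * (Q oo U)" by (simp add: mult.commute)
  hence "fps_nth (B oo U) n = (\<Sum>k=0..n. (x gchoose k) * fps_nth U (Suc (n - k)))"
    by (simp add: fps_mult_nth QUn)
  also have "\<dots> = (\<Sum>k\<le>n. (x gchoose k) * lam ^ (n - k) * dfall (1 / lam) 1 (n - k + 1)
                                / fact (n - k + 1))"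
    unfolding atMost_atLeast0 U_def UU_nth[OF assms] by (simp add: mult.assoc)
  finally show ?thesis using L by simp
qed

end
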